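(* Let $G$ be a vertex-weighted complex digraph (as defined in the context) and $k\ge 1$ an integer. Then $G$ has exactly $k$ connected components if and only if the algebraic multiplicity of the eigenvalue $0$ of $L(G)$ equals $k$.
   Context: A vertex-weighted complex digraph is $G=(V,E)$ with $V=\{1,\dots,n\}$, $E\subseteq\{(i,j)\in V\times V:i\neq j\}$ such that for $i\neq j$ at most one of $(i,j),(j,i)$ lies in $E$, together with nonzero complex vertex weights $w_1,\dots,w_n\in\mathbb C\setminus\{0\}$; for each $i$ fix a square root $s_i$ with $s_i^2=w_i$. Vertices $i\neq j$ are adjacent iff $(i,j)\in E$ or $(j,i)\in E$. The adjacency matrix $A(G)$ has $A_{ij}=\overline{s_i}\,s_j$ if $i,j$ are adjacent and $A_{ij}=0$ otherwise. The degree of vertex $i$ is $d_i=\sum_{j \text{ adjacent to } i}|w_j|$, $D(G)=\mathrm{diag}(d_1,\dots,d_n)$, the combinatorial Laplacian is $L(G)=D(G)-A(G)$ and the signless Laplacian is $Q(G)=D(G)+A(G)$; both are Hermitian positive semidefinite. Connectivity, connected components and cycles refer to the underlying undirected graph. *)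

theory Defs
  imports "Jordan_Normal_Form.Jordan_Normal_Form" "HOL-Library.Disjoint_Sets"
begin

text \<open>Vertices are indexed 0..<n (instead of 1..n) to match matrix indexing.
  E is a set of directed edges; w the vertex weights; s chosen square roots.\<close>

definition wdigraph :: "nat \<Rightarrow> (nat \<times> nat) set \<Rightarrow> (nat \<Rightarrow> complex) \<Rightarrow> (nat \<Rightarrow> complex) \<Rightarrow> bool" where
  "wdigraph n E w s \<longleftrightarrow>
     E \<subseteq> {(i,j). i < n \<and> j < n \<and> i \<noteq> j} \<and>
     (\<forall>i j. (i,j) \<in> E \<longrightarrow> (j,i) \<notin> E) \<and>
     (\<forall>i<n. w i \<noteq> 0 \<and> (s i)\<^sup>2 = w i)"

definition adjacent :: "(nat \<times> nat) set \<Rightarrow> nat \<Rightarrow> nat \<Rightarrow> bool" where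
  "adjacent E i j \<longleftrightarrow> i \<noteq> j \<and> ((i,j) \<in> E \<or> (j,i) \<in> E)"

definition adj_mat :: "nat \<Rightarrow> (nat \<times> nat) set \<Rightarrow> (nat \<Rightarrow> complex) \<Rightarrow> complex mat" where
  "adj_mat n E s = mat n n (\<lambda>(i,j). if adjacent E i j then cnj (s i) * s j else 0)"

definition degree :: "nat \<Rightarrow> (nat \<times> nat) set \<Rightarrow> (nat \<Rightarrow> complex) \<Rightarrow> nat \<Rightarrow> real" where
  "degree n E w i = (\<Sum>j\<in>{j. j < n \<and> adjacent E i j}. cmod (w j))"

definition deg_mat :: "nat \<Rightarrow> (nat \<times> nat) set \<Rightarrow> (nat \<Rightarrow> complex) \<Rightarrow> complex mat" where
  "deg_mat n E w = mat n n (\<lambda>(i,j). if i = j then complex_of_real (degree n E w i) else 0)"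

definition laplacian :: "nat \<Rightarrow> (nat \<times> nat) set \<Rightarrow> (nat \<Rightarrow> complex) \<Rightarrow> (nat \<Rightarrow> complex) \<Rightarrow> complex mat" where
  "laplacian n E w s = deg_mat n E w - adj_mat n E s"

definition conn_rel :: "nat \<Rightarrow> (nat \<times> nat) set \<Rightarrow> (nat \<times> nat) set" where
  "conn_rel n E = ({(i,j). i < n \<and> j < n \<and> adjacent E i j})\<^sup>* \<inter> ({0..<n} \<times> {0..<n})"

definition num_components :: "nat \<Rightarrow> (nat \<times> nat) set \<Rightarrow> nat" where
  "num_components n E = card ({0..<n} // conn_rel n E)"

definition alg_mult :: "complex mat \<Rightarrow> complex \<Rightarrow> nat" where
  "alg_mult A a = order a (char_poly A)"

end

theory Submission
  imports Defs "Jordan_Normal_Form.Jordan_Normal_Form_Uniqueness" "Jordan_Normal_Form.Jordan_Normal_Form_Existence"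
begin


lemma sum_min12: "sum_list (map (min (1::nat)) xs) = sum_list (map (min 2) xs) \<Longrightarrow>
   sum_list xs = sum_list (map (min 1) xs)"
proof (induct xs)
  case (Cons x xs)
  have le: "sum_list (map (min (1::nat)) xs) \<le> sum_list (map (min 2) xs)"
    by (rule sum_list_mono, auto)
  from Cons.prems le have "min 1 x = min 2 x" and "sum_list (map (min (1::nat)) xs) = sum_list (map (min 2) xs)"
    by auto
  with Cons.hyps show ?case by auto
qed simp

lemma alg_mult_ker2:
  fixes A :: "complex mat"
  assumes A: "A \<in> carrier_mat n n" and ker: "mat_kernel (A*A) = mat_kernel A"
  shows "alg_mult A 0 = kernel_dim A"
proof -
  from char_poly_factorized[OF A] obtain as where "char_poly A = (\<Prod>a\<leftarrow>as. [:- a, 1:])" by auto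
  from jordan_nf_exists[OF A this] obtain n_as where jnf: "jordan_nf A n_as" ..
  have cm: "char_matrix A 0 = A" unfolding char_matrix_def using A by auto
  have p1: "A ^\<^sub>m 1 = A" using A by simp
  have p2: "A ^\<^sub>m 2 = A * A" using A by (simp add: numeral_2_eq_2)
  have kd: "kernel_dim (A * A) = kernel_dim A" unfolding kernel_dim_def using A ker by simp
  have d1: "dim_gen_eigenspace A 0 1 = kernel_dim A" unfolding dim_gen_eigenspace_def cm p1 ..
  have d2: "dim_gen_eigenspace A 0 2 = kernel_dim A" unfolding dim_gen_eigenspace_def cm p2 kd ..
  define xs where "xs = map fst [(n, e)\<leftarrow>n_as . e = 0]"
  have e1: "sum_list (map (min 1) xs) = kernel_dim A" using dim_gen_eigenspace[OF jnf, of 0 1] d1 xs_def by simp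
  have e2: "sum_list (map (min 2) xs) = kernel_dim A" using dim_gen_eigenspace[OF jnf, of 0 2] d2 xs_def by simp
  have "alg_mult A 0 = sum_list xs" unfolding alg_mult_def jordan_nf_order[OF jnf] xs_def
    by (induct n_as, auto)
  also have "\<dots> = sum_list (map (min 1) xs)" by (rule sum_min12, unfold e1 e2, rule refl)
  finally show ?thesis using e1 by simp
qed



lemma lap_carrier: "laplacian n E w s \<in> carrier_mat n n"
  unfolding laplacian_def deg_mat_def adj_mat_def by auto

lemma lap_index: "i < n \<Longrightarrow> j < n \<Longrightarrow> laplacian n E w s $$ (i,j) =
   (if i = j then complex_of_real (degree n E w i) else 0) - (if adjacent E i j then cnj (s i) * s j else 0)"
  unfolding laplacian_def deg_mat_def adj_mat_def by auto

lemma adjacent_sym: "adjacent E i j = adjacent E j i"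
  unfolding adjacent_def by auto

lemma adjacent_irrefl: "\<not> adjacent E i i"
  unfolding adjacent_def by auto

lemma lap_herm: "i < n \<Longrightarrow> j < n \<Longrightarrow> laplacian n E w s $$ (j,i) = cnj (laplacian n E w s $$ (i,j))"
  by (auto simp: lap_index adjacent_sym)

lemma lap_mult:
  assumes x: "x \<in> carrier_vec n" and i: "i < n"
  shows "(laplacian n E w s *\<^sub>v x) $ i =
    (\<Sum>j\<in>{j. j < n \<and> adjacent E i j}. complex_of_real (cmod (w j)) * x $ i - cnj (s i) * s j * x $ j)"
proof -
  let ?L = "laplacian n E w s"
  let ?N = "{j. j < n \<and> adjacent E i j}"
  have "(?L *\<^sub>v x) $ i = (\<Sum>j\<in>{0..<n}. ?L $$ (i,j) * x $ j)"
    using x i lap_carrier[of n E w s] by (auto simp: mult_mat_vec_def scalar_prod_def)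
  also have "\<dots> = (\<Sum>j\<in>{0..<n}. (if i = j then complex_of_real (degree n E w i) * x $ j else 0))
     - (\<Sum>j\<in>{0..<n}. (if adjacent E i j then cnj (s i) * s j * x $ j else 0))"
    unfolding sum_subtractf[symmetric] by (rule sum.cong, auto simp: lap_index i adjacent_irrefl)
  also have "(\<Sum>j\<in>{0..<n}. (if i = j then complex_of_real (degree n E w i) * x $ j else 0))
     = complex_of_real (degree n E w i) * x $ i" using i by simp
  also have "(\<Sum>j\<in>{0..<n}. (if adjacent E i j then cnj (s i) * s j * x $ j else 0))
     = (\<Sum>j\<in>?N. cnj (s i) * s j * x $ j)"
    by (subst sum.inter_filter[symmetric], auto intro!: sum.cong)
  also have "complex_of_real (degree n E w i) * x $ i = (\<Sum>j\<in>?N. complex_of_real (cmod (w j)) * x $ i)"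
    unfolding degree_def by (simp add: sum_distrib_right)
  finally show ?thesis by (simp add: sum_subtractf)
qed

lemma mult_mat_vec_zero: "A \<in> carrier_mat nr n \<Longrightarrow> A *\<^sub>v 0\<^sub>v n = 0\<^sub>v nr"
  by (intro eq_vecI, auto simp: mult_mat_vec_def)

lemma herm_ker2:
  fixes A :: "complex mat"
  assumes A: "A \<in> carrier_mat n n" and h: "\<And>i j. i < n \<Longrightarrow> j < n \<Longrightarrow> A $$ (j,i) = cnj (A $$ (i,j))"
  shows "mat_kernel (A * A) = mat_kernel A"
proof -
  have AA: "A * A \<in> carrier_mat n n" using A by auto
  have hc: "cnj (A $$ (i,j)) = A $$ (j,i)" if "i < n" "j < n" for i j using h[of j i] that by simp
  have K1: "A *\<^sub>v v = 0\<^sub>v n" if v: "v \<in> carrier_vec n" and z: "(A * A) *\<^sub>v v = 0\<^sub>v n" for v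
  proof -
    define u where "u = A *\<^sub>v v"
    have u: "u \<in> carrier_vec n" using A v u_def by auto
    have Au: "A *\<^sub>v u = 0\<^sub>v n" using z A v unfolding u_def by (simp add: assoc_mult_mat_vec)
    have ui: "\<And>i. i < n \<Longrightarrow> u $ i = (\<Sum>j\<in>{0..<n}. A $$ (i,j) * v $ j)"
      using A v unfolding u_def by (auto simp: mult_mat_vec_def scalar_prod_def)
    have Aui: "\<And>j. j < n \<Longrightarrow> (\<Sum>i\<in>{0..<n}. A $$ (j,i) * u $ i) = 0"
    proof -
      fix j assume j: "j < n"
      have "(A *\<^sub>v u) $ j = (\<Sum>i\<in>{0..<n}. A $$ (j,i) * u $ i)"
        using A u j by (auto simp: mult_mat_vec_def scalar_prod_def)
      thus "(\<Sum>i\<in>{0..<n}. A $$ (j,i) * u $ i) = 0" using Au j by simp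
    qed
    have "(\<Sum>i\<in>{0..<n}. cnj (u $ i) * u $ i) = (\<Sum>i\<in>{0..<n}. \<Sum>j\<in>{0..<n}. cnj (A $$ (i,j)) * cnj (v $ j) * u $ i)"
      by (rule sum.cong, simp, simp add: ui sum_distrib_right)
    also have "\<dots> = (\<Sum>j\<in>{0..<n}. \<Sum>i\<in>{0..<n}. cnj (v $ j) * (A $$ (j,i) * u $ i))"
      by (subst sum.swap, intro sum.cong refl, simp add: hc mult_ac)
    also have "\<dots> = (\<Sum>j\<in>{0..<n}. cnj (v $ j) * (\<Sum>i\<in>{0..<n}. A $$ (j,i) * u $ i))"
      by (simp add: sum_distrib_left)
    also have "\<dots> = 0" by (simp add: Aui)
    finally have s0: "(\<Sum>i\<in>{0..<n}. cnj (u $ i) * u $ i) = 0" .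
    have q: "(\<Sum>i\<in>{0..<n}. cnj (u $ i) * u $ i) = complex_of_real (\<Sum>i\<in>{0..<n}. (cmod (u $ i))\<^sup>2)"
      unfolding of_real_sum by (rule sum.cong, simp, subst complex_norm_square, simp add: mult.commute)
    have "(\<Sum>i\<in>{0..<n}. (cmod (u $ i))\<^sup>2) = 0" using q s0 of_real_eq_0_iff by metis
    hence "\<forall>i\<in>{0..<n}. (cmod (u $ i))\<^sup>2 = 0" by (subst sum_nonneg_eq_0_iff[symmetric], auto)
    hence "u = 0\<^sub>v n" using u by (auto intro!: eq_vecI)
    thus "A *\<^sub>v v = 0\<^sub>v n" unfolding u_def .
  qed
  have K2: "(A * A) *\<^sub>v v = 0\<^sub>v n" if v: "v \<in> carrier_vec n" and z: "A *\<^sub>v v = 0\<^sub>v n" for v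
    using A v z by (simp add: assoc_mult_mat_vec mult_mat_vec_zero)
  have e1: "mat_kernel (A*A) = {v. v \<in> carrier_vec n \<and> (A*A) *\<^sub>v v = 0\<^sub>v n}"
    unfolding mat_kernel_def carrier_matD[OF AA] ..
  have e2: "mat_kernel A = {v. v \<in> carrier_vec n \<and> A *\<^sub>v v = 0\<^sub>v n}"
    unfolding mat_kernel_def carrier_matD[OF A] ..
  show ?thesis unfolding e1 e2 using K1 K2 by blast
qed



lemma conn_equiv: "equiv {0..<n} (conn_rel n E)"
proof -
  let ?A = "{(i,j). i < n \<and> j < n \<and> adjacent E i j}"
  have symA: "sym ?A" unfolding sym_def using adjacent_sym by blast
  show ?thesis unfolding equiv_def conn_rel_def
  proof (intro conjI)
    show "refl_on {0..<n} (?A\<^sup>* \<inter> {0..<n} \<times> {0..<n})" unfolding refl_on_def by auto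
    show "sym (?A\<^sup>* \<inter> {0..<n} \<times> {0..<n})"
      by (intro sym_Int sym_rtrancl symA) (auto simp: sym_def)
    show "trans (?A\<^sup>* \<inter> {0..<n} \<times> {0..<n})"
      by (intro trans_Int trans_rtrancl) (auto simp: trans_def)
  qed auto
qed

lemma adj_conn: "i < n \<Longrightarrow> j < n \<Longrightarrow> adjacent E i j \<Longrightarrow> (i,j) \<in> conn_rel n E"
  unfolding conn_rel_def by auto

lemma conn_induct:
  assumes "(i,j) \<in> conn_rel n E"
    and step: "\<And>a b. a < n \<Longrightarrow> b < n \<Longrightarrow> adjacent E a b \<Longrightarrow> f a = f b"
  shows "f i = f j"
proof -
  let ?A = "{(i,j). i < n \<and> j < n \<and> adjacent E i j}"
  from assms(1) have "(i,j) \<in> ?A\<^sup>*" unfolding conn_rel_def by auto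
  thus ?thesis
  proof (induct rule: rtrancl_induct)
    case (step b c)
    hence "f b = f c" using assms(2)[of b c] by auto
    with step show ?case by simp
  qed simp
qed

lemma norm_w: assumes "(s j)\<^sup>2 = w j" shows "complex_of_real (cmod (w j)) = s j * cnj (s j)"
proof -
  have "cmod (w j) = (cmod (s j))\<^sup>2" using assms by (metis norm_power)
  thus ?thesis by (metis complex_norm_square)
qed

lemma ker_adj:
  assumes G: "wdigraph n E w s" and x: "x \<in> mat_kernel (laplacian n E w s)"
    and i: "i < n" and j: "j < n" and adj: "adjacent E i j"
  shows "x $ i / cnj (s i) = x $ j / cnj (s j)"
proof -
  let ?L = "laplacian n E w s"
  have snz: "\<And>k. k < n \<Longrightarrow> s k \<noteq> 0" and sq: "\<And>k. k < n \<Longrightarrow> (s k)\<^sup>2 = w k"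
    using G unfolding wdigraph_def by (metis power2_eq_square mult_zero_left)+
  have xc: "x \<in> carrier_vec n" and Lx: "?L *\<^sub>v x = 0\<^sub>v n"
    using mat_kernelD[OF lap_carrier x] by auto
  define y where "y k = x $ k / cnj (s k)" for k
  have xy: "x $ k = cnj (s k) * y k" if "k < n" for k using snz[OF that] unfolding y_def by simp
  define a where "a k = s k * cnj (s k)" for k
  define N where "N k = {j. j < n \<and> adjacent E k j}" for k
  define P where "P = Sigma {0..<n} N"
  define f where "f p = a (fst p) * a (snd p) * (cnj (y (fst p)) * (y (fst p) - y (snd p)))" for p
  have finN: "finite (N k)" for k unfolding N_def by auto
  have finP: "finite P" unfolding P_def using finN by auto
  have tm: "cnj (x $ k) * (complex_of_real (cmod (w l)) * x $ k - cnj (s k) * s l * x $ l) = f (k,l)"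
    if "k < n" "l < n" for k l
    unfolding f_def a_def using that by (simp add: xy norm_w sq algebra_simps)
  have "(\<Sum>k\<in>{0..<n}. cnj (x $ k) * (?L *\<^sub>v x) $ k) = 0" using Lx by simp
  also have "(\<Sum>k\<in>{0..<n}. cnj (x $ k) * (?L *\<^sub>v x) $ k) = (\<Sum>k\<in>{0..<n}. \<Sum>l\<in>N k. f (k,l))"
    by (rule sum.cong, simp, simp add: lap_mult[OF xc] sum_distrib_left N_def tm)
  also have "\<dots> = (\<Sum>p\<in>P. f p)" unfolding P_def by (subst sum.Sigma) (auto simp: finN)
  finally have S0: "(\<Sum>p\<in>P. f p) = 0" by simp
  have Sw: "(\<Sum>p\<in>P. f (prod.swap p)) = (\<Sum>p\<in>P. f p)"
    by (rule sum.reindex_bij_witness[of _ prod.swap prod.swap], auto simp: P_def N_def adjacent_sym)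
  define g where "g p = (cmod (s (fst p)))\<^sup>2 * (cmod (s (snd p)))\<^sup>2 * (cmod (y (fst p) - y (snd p)))\<^sup>2" for p
  have gf: "complex_of_real (g p) = f p + f (prod.swap p)" for p
  proof -
    obtain k l where p: "p = (k,l)" by force
    have "complex_of_real (g p) = a k * a l * ((y k - y l) * cnj (y k - y l))"
      unfolding g_def p a_def fst_conv snd_conv of_real_mult complex_norm_square by (simp only: mult_ac)
    also have "\<dots> = f p + f (prod.swap p)" unfolding f_def p by (simp add: algebra_simps)
    finally show ?thesis .
  qed
  have "complex_of_real (\<Sum>p\<in>P. g p) = 0" unfolding of_real_sum gf sum.distrib Sw S0 by simp
  hence g0: "(\<Sum>p\<in>P. g p) = 0" by (metis of_real_eq_0_iff)
  have "\<forall>p\<in>P. g p = 0" using g0 finP by (subst sum_nonneg_eq_0_iff[symmetric], auto simp: g_def)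
  moreover have ijP: "(i,j) \<in> P" unfolding P_def N_def using i j adj by auto
  ultimately have "g (i,j) = 0" by blast
  hence "y i = y j" unfolding g_def using snz[OF i] snz[OF j] by simp
  thus ?thesis unfolding y_def .
qed

definition vC :: "nat \<Rightarrow> (nat \<Rightarrow> complex) \<Rightarrow> nat set \<Rightarrow> complex vec" where
  "vC n s C = vec n (\<lambda>i. if i \<in> C then cnj (s i) else 0)"

lemma vC_carrier[simp]: "vC n s C \<in> carrier_vec n" unfolding vC_def by auto

lemma vC_index[simp]: "i < n \<Longrightarrow> vC n s C $ i = (if i \<in> C then cnj (s i) else 0)"
  unfolding vC_def by auto

lemma ker_conn:
  assumes G: "wdigraph n E w s" and x: "x \<in> mat_kernel (laplacian n E w s)"
    and ij: "(i,j) \<in> conn_rel n E"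
  shows "x $ i / cnj (s i) = x $ j / cnj (s j)"
  by (rule conn_induct[OF ij, of "\<lambda>k. x $ k / cnj (s k)"], rule ker_adj[OF G x])

lemma vC_ker:
  assumes G: "wdigraph n E w s" and C: "C \<in> {0..<n} // conn_rel n E"
  shows "vC n s C \<in> mat_kernel (laplacian n E w s)"
proof (rule mat_kernelI[OF lap_carrier vC_carrier], rule eq_vecI)
  have sq: "\<And>k. k < n \<Longrightarrow> (s k)\<^sup>2 = w k"
    using G unfolding wdigraph_def by auto
  note eqv = conn_equiv[of n E]
  fix i assume i: "i < dim_vec (0\<^sub>v n :: complex vec)"
  hence i: "i < n" by simp
  have "(laplacian n E w s *\<^sub>v vC n s C) $ i = 0"
    unfolding lap_mult[OF vC_carrier i]
  proof (rule sum.neutral, intro ballI)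
    fix j assume "j \<in> {j. j < n \<and> adjacent E i j}"
    hence j: "j < n" and adj: "adjacent E i j" by auto
    have ij: "(i,j) \<in> conn_rel n E" and ji: "(j,i) \<in> conn_rel n E"
      using adj_conn[OF i j adj] adj_conn[OF j i] adj adjacent_sym by auto
    have iff: "i \<in> C \<longleftrightarrow> j \<in> C"
      using in_quotient_imp_closed[OF eqv C _ ij] in_quotient_imp_closed[OF eqv C _ ji] by blast
    show "complex_of_real (cmod (w j)) * vC n s C $ i - cnj (s i) * s j * vC n s C $ j = 0"
      using iff i j by (simp add: norm_w[of s j w, OF sq[OF j]] algebra_simps)
  qed
  thus "(laplacian n E w s *\<^sub>v vC n s C) $ i = 0\<^sub>v n $ i" using i by simp
qed (simp add: lap_carrier[THEN carrier_matD(1)])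

lemma kernel_dim_lap:
  assumes G: "wdigraph n E w s"
  shows "kernel_dim (laplacian n E w s) = num_components n E"
proof -
  let ?L = "laplacian n E w s"
  let ?R = "conn_rel n E"
  let ?Q = "{0..<n} // ?R"
  let ?B = "vC n s ` ?Q"
  note eqv = conn_equiv[of n E]
  have snz: "\<And>k. k < n \<Longrightarrow> s k \<noteq> 0"
    using G unfolding wdigraph_def by (metis power2_eq_square mult_zero_left)
  interpret K: kernel n n ?L by (unfold_locales, rule lap_carrier)
  have finQ: "finite ?Q" by (rule finite_quotient, auto simp: conn_rel_def)
  have sub: "\<And>C. C \<in> ?Q \<Longrightarrow> C \<subseteq> {0..<n}" using in_quotient_imp_subset[OF eqv] by blast
  have disj: "\<And>C D i. C \<in> ?Q \<Longrightarrow> D \<in> ?Q \<Longrightarrow> i \<in> C \<Longrightarrow> i \<in> D \<Longrightarrow> C = D"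
    using quotient_disj[OF eqv] by blast
  have ne: "\<And>C. C \<in> ?Q \<Longrightarrow> \<exists>i. i \<in> C" using in_quotient_imp_non_empty[OF eqv] by blast
  have inj: "inj_on (vC n s) ?Q"
  proof (rule inj_onI)
    fix C D assume C: "C \<in> ?Q" and D: "D \<in> ?Q" and eq: "vC n s C = vC n s D"
    from ne[OF C] obtain i where iC: "i \<in> C" by auto
    with sub[OF C] have i: "i < n" by auto
    have "vC n s D $ i \<noteq> 0" unfolding eq[symmetric] using iC i snz[OF i] by simp
    hence "i \<in> D" using i by (simp split: if_splits)
    thus "C = D" using disj[OF C D iC] by simp
  qed
  have Bker: "?B \<subseteq> mat_kernel ?L" using vC_ker[OF G] by auto
  have finB: "finite ?B" using finQ by simp
  have li: "\<not> K.lin_dep ?B"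
  proof
    assume "K.lin_dep ?B"
    then obtain A a v where finA: "finite A" and AB: "A \<subseteq> ?B" and lc: "K.lincomb a A = 0\<^sub>v n"
      and vA: "v \<in> A" and av: "a v \<noteq> 0"
      unfolding K.Ker.lin_dep_def by auto
    from vA AB obtain C where C: "C \<in> ?Q" and v: "v = vC n s C" by auto
    from ne[OF C] obtain i where iC: "i \<in> C" by auto
    with sub[OF C] have i: "i < n" by auto
    have Aker: "A \<subseteq> mat_kernel ?L" using AB Bker by auto
    have "0 = K.lincomb a A $ i" using lc i by simp
    also have "\<dots> = (\<Sum>u\<in>A. a u * u $ i)" by (rule K.lincomb_index[OF i Aker])
    also have "\<dots> = a v * v $ i + (\<Sum>u\<in>A - {v}. a u * u $ i)" by (rule sum.remove[OF finA vA])
    also have "(\<Sum>u\<in>A - {v}. a u * u $ i) = 0"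
    proof (rule sum.neutral, intro ballI)
      fix u assume u: "u \<in> A - {v}"
      then obtain D where D: "D \<in> ?Q" and ud: "u = vC n s D" using AB by auto
      have "i \<notin> D" using disj[OF C D iC] u ud v by auto
      thus "a u * u $ i = 0" using ud i by simp
    qed
    finally have "a v * cnj (s i) = 0" using v iC i by simp
    thus False using av snz[OF i] by simp
  qed
  have span: "K.span ?B = mat_kernel ?L"
  proof
    show "K.span ?B \<subseteq> mat_kernel ?L" by (rule K.Ker.span_is_subset2[OF Bker])
    show "mat_kernel ?L \<subseteq> K.span ?B"
    proof
      fix x assume x: "x \<in> mat_kernel ?L"
      have xc: "x \<in> carrier_vec n" using mat_kernelD[OF lap_carrier x] by auto
      define y where "y k = x $ k / cnj (s k)" for k
      define c where "c u = y (SOME i. i < n \<and> u $ i \<noteq> 0)" for u :: "complex vec"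
      have lcc: "K.lincomb c ?B \<in> mat_kernel ?L" by (rule K.Ker.lincomb_closed[OF Bker], auto)
      have "x = K.lincomb c ?B"
      proof (rule eq_vecI)
        show "dim_vec x = dim_vec (K.lincomb c ?B)" using xc mat_kernelD(1)[OF lap_carrier lcc] by simp
        fix i assume "i < dim_vec (K.lincomb c ?B)"
        hence i: "i < n" using mat_kernelD(1)[OF lap_carrier lcc] by simp
        define Ci where "Ci = ?R `` {i}"
        have Ci: "Ci \<in> ?Q" unfolding Ci_def using i by (intro quotientI, simp)
        have iCi: "i \<in> Ci" unfolding Ci_def using equiv_class_self[OF eqv] i by simp
        have "K.lincomb c ?B $ i = (\<Sum>u\<in>?B. c u * u $ i)" by (rule K.lincomb_index[OF i Bker])
        also have "\<dots> = (\<Sum>C\<in>?Q. c (vC n s C) * vC n s C $ i)" by (rule sum.reindex[OF inj, unfolded o_def])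
        also have "\<dots> = c (vC n s Ci) * vC n s Ci $ i + (\<Sum>C\<in>?Q - {Ci}. c (vC n s C) * vC n s C $ i)"
          by (rule sum.remove[OF finQ Ci])
        also have "(\<Sum>C\<in>?Q - {Ci}. c (vC n s C) * vC n s C $ i) = 0"
        proof (rule sum.neutral, intro ballI)
          fix D assume D: "D \<in> ?Q - {Ci}"
          hence "i \<notin> D" using disj[OF Ci _ iCi] by auto
          thus "c (vC n s D) * vC n s D $ i = 0" using i by simp
        qed
        also have "c (vC n s Ci) = y i"
        proof -
          have ex: "\<exists>j. j < n \<and> vC n s Ci $ j \<noteq> 0" using i iCi snz[OF i] by (intro exI[of _ i], simp)
          define j where "j = (SOME j. j < n \<and> vC n s Ci $ j \<noteq> 0)"
          have j: "j < n" "vC n s Ci $ j \<noteq> 0" using someI_ex[OF ex] unfolding j_def by blast+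
          hence "j \<in> Ci" by (cases "j \<in> Ci", auto)
          hence "(i,j) \<in> ?R" unfolding Ci_def by simp
          from ker_conn[OF G x this] have "y i = y j" unfolding y_def .
          thus ?thesis unfolding c_def j_def[symmetric] by simp
        qed
        finally have "K.lincomb c ?B $ i = y i * cnj (s i)" using iCi i by simp
        also have "\<dots> = x $ i" unfolding y_def using snz[OF i] by simp
        finally show "x $ i = K.lincomb c ?B $ i" by simp
      qed
      thus "x \<in> K.span ?B" unfolding K.Ker.span_def using finB by auto
    qed
  qed
  have basis: "K.basis ?B" unfolding K.Ker.basis_def using li span Bker by auto
  have "kernel_dim ?L = K.dim" by simp
  also have "\<dots> = card ?B" by (rule K.Ker.dim_basis[OF finB basis])
  also have "\<dots> = card ?Q" by (rule card_image[OF inj])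
  finally show ?thesis unfolding num_components_def .
qed


theorem corollary2p7:
  fixes n k :: nat and E :: "(nat \<times> nat) set" and w s :: "nat \<Rightarrow> complex"
  assumes "wdigraph n E w s" and "k \<ge> 1"
  shows "num_components n E = k \<longleftrightarrow> alg_mult (laplacian n E w s) 0 = k"
proof -
  have "alg_mult (laplacian n E w s) 0 = kernel_dim (laplacian n E w s)"
    by (rule alg_mult_ker2[OF lap_carrier herm_ker2[OF lap_carrier lap_herm]])
  also have "\<dots> = num_components n E" by (rule kernel_dim_lap[OF assms(1)])
  finally show ?thesis by simp
qed

end
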